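(* Let $R$ be an almost Dedekind domain and $M\in\mathrm{Max}(R)$. Then $M$ is an isolated point of $\mathcal{M}$ if and only if $M$ is finitely generated.
   Context: $R$ almost Dedekind: $R_M$ is a DVR for every maximal $M$. $\mathcal{M}$ is $\mathrm{Max}(R)$ with the inverse topology, i.e. the restriction of the coarsest topology on $\mathrm{Spec}(R)$ in which every Zariski-open Zariski-compact subset is closed (on $\mathrm{Max}(R)$ it coincides with the constructible topology). *)

theory Defs
  imports "HOL-Analysis.Analysis" "HOL-Computational_Algebra.Fraction_Field"
begin

definition subring_of :: "'a::comm_ring_1 set \<Rightarrow> bool" where
  "subring_of S \<longleftrightarrow> 0 \<in> S \<and> 1 \<in> S \<and> (\<forall>a\<in>S. \<forall>b\<in>S. a + b \<in> S \<and> a * b \<in> S \<and> - a \<in> S)"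

definition ideal_in :: "'a::comm_ring_1 set \<Rightarrow> 'a set \<Rightarrow> bool" where
  "ideal_in S I \<longleftrightarrow> I \<subseteq> S \<and> 0 \<in> I \<and> (\<forall>a\<in>I. \<forall>b\<in>I. a + b \<in> I)
      \<and> (\<forall>r\<in>S. \<forall>a\<in>I. r * a \<in> I)"

definition prime_ideal_in :: "'a::comm_ring_1 set \<Rightarrow> 'a set \<Rightarrow> bool" where
  "prime_ideal_in S P \<longleftrightarrow> ideal_in S P \<and> P \<noteq> S
      \<and> (\<forall>a\<in>S. \<forall>b\<in>S. a * b \<in> P \<longrightarrow> a \<in> P \<or> b \<in> P)"

definition maximal_ideal_in :: "'a::comm_ring_1 set \<Rightarrow> 'a set \<Rightarrow> bool" where
  "maximal_ideal_in S M \<longleftrightarrow> ideal_in S M \<and> M \<noteq> S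
      \<and> (\<forall>J. ideal_in S J \<and> M \<subseteq> J \<longrightarrow> J = M \<or> J = S)"

definition principal_in :: "'a::comm_ring_1 set \<Rightarrow> 'a set \<Rightarrow> bool" where
  "principal_in S I \<longleftrightarrow> (\<exists>x\<in>S. I = {r * x | r. r \<in> S})"

definition is_DVR :: "'k::field set \<Rightarrow> bool" where
  "is_DVR S \<longleftrightarrow> subring_of S
      \<and> (\<forall>I. ideal_in S I \<longrightarrow> principal_in S I)
      \<and> (\<exists>!M. maximal_ideal_in S M)
      \<and> (\<exists>x\<in>S. x \<noteq> 0 \<and> inverse x \<notin> S)"

abbreviation Spec :: "'a::comm_ring_1 set set" where
  "Spec \<equiv> {P. prime_ideal_in UNIV P}"

abbreviation Max_spec :: "'a::comm_ring_1 set set" where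
  "Max_spec \<equiv> {M. maximal_ideal_in UNIV M}"

definition localization :: "'a::idom set \<Rightarrow> 'a fract set" where
  "localization M = {Fract a s | a s. s \<notin> M}"

definition almost_dedekind :: "'a::idom itself \<Rightarrow> bool" where
  "almost_dedekind TYPE('a) \<longleftrightarrow>
     (\<forall>M::'a set. maximal_ideal_in UNIV M \<longrightarrow> is_DVR (localization M))"

definition finitely_generated_ideal :: "'a::comm_ring_1 set \<Rightarrow> bool" where
  "finitely_generated_ideal I \<longleftrightarrow>
     (\<exists>F. finite F \<and> I = {\<Sum>f\<in>F. c f * f | c. True})"

definition zariski :: "'a::comm_ring_1 set topology" where
  "zariski = subtopology (topology_generated_by {{P \<in> Spec. \<not> X \<subseteq> P} | X. True}) Spec"

definition inverse_topology :: "'a::comm_ring_1 set topology" where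
  "inverse_topology = subtopology
     (topology_generated_by {Spec - U | U. openin zariski U \<and> compactin zariski U}) Spec"

definition max_inverse :: "'a::comm_ring_1 set topology" where
  "max_inverse = subtopology inverse_topology Max_spec"

definition isolated_point_in :: "'b topology \<Rightarrow> 'b \<Rightarrow> bool" where
  "isolated_point_in T x \<longleftrightarrow> x \<in> topspace T \<and> openin T {x}"

end

theory Submission
  imports Defs
begin

section \<open>Ideal basics\<close>

lemma idealD:
  assumes "ideal_in UNIV I"
  shows "0 \<in> I" "a \<in> I \<Longrightarrow> b \<in> I \<Longrightarrow> a + b \<in> I" "a \<in> I \<Longrightarrow> r * a \<in> I"
  using assms unfolding ideal_in_def by auto

lemma ideal_mult_right:
  assumes "ideal_in UNIV I" "a \<in> I" shows "a * r \<in> I"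
  using idealD(3)[OF assms, of r] by (simp add: mult.commute)

lemma ideal_one_UNIV:
  assumes "ideal_in UNIV I" "1 \<in> I" shows "I = UNIV"
  using idealD(3)[OF assms] by (metis UNIV_eq_I mult.right_neutral)

lemma ideal_sum:
  assumes "ideal_in UNIV I" "finite F" "\<And>f. f \<in> F \<Longrightarrow> g f \<in> I"
  shows "sum g F \<in> I"
  using assms(2,3)
proof (induction F rule: finite_induct)
  case empty then show ?case using idealD(1)[OF assms(1)] by simp
next
  case (insert x F) then show ?case using idealD(2)[OF assms(1)] by simp
qed

definition gen :: "'a::comm_ring_1 \<Rightarrow> 'a set \<Rightarrow> 'a set" where
  "gen x P = {p + r * x | p r. p \<in> P}"

lemma gen_I: "p \<in> P \<Longrightarrow> p + r * x \<in> gen x P"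
  unfolding gen_def by blast

lemma gen_ideal:
  assumes "ideal_in UNIV P" shows "ideal_in UNIV (gen x P)"
proof -
  have "0 + 0 * x \<in> gen x P" using gen_I idealD(1)[OF assms] by blast
  then have "0 \<in> gen x P" by simp
  moreover have "a + b \<in> gen x P" if ab: "a \<in> gen x P" "b \<in> gen x P" for a b
  proof -
    obtain p1 r1 p2 r2 where "p1 \<in> P" "p2 \<in> P" "a = p1 + r1 * x" "b = p2 + r2 * x"
      using ab unfolding gen_def by auto
    then have "a + b = (p1 + p2) + (r1 + r2) * x" "p1 + p2 \<in> P"
      using idealD(2)[OF assms] by (auto simp: algebra_simps)
    then show ?thesis unfolding gen_def by blast
  qed
  moreover have "s * a \<in> gen x P" if a: "a \<in> gen x P" for a s
  proof -
    obtain p1 r1 where "p1 \<in> P" "a = p1 + r1 * x"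
      using a unfolding gen_def by auto
    then have "s * a = (s * p1) + (s * r1) * x" "s * p1 \<in> P"
      using idealD(3)[OF assms] by (auto simp: algebra_simps)
    then show ?thesis unfolding gen_def by blast
  qed
  ultimately show ?thesis unfolding ideal_in_def by blast
qed

lemma gen_sub: "P \<subseteq> gen x P"
  using gen_I[of _ P 0 x] by auto

lemma gen_mem: assumes "ideal_in UNIV P" shows "x \<in> gen x P"
  using gen_I[of 0 P 1 x] idealD(1)[OF assms] by auto

lemma zorn_avoid:
  fixes K T :: "'a::comm_ring_1 set"
  assumes "ideal_in UNIV K" "K \<inter> T = {}"
  shows "\<exists>P. ideal_in UNIV P \<and> K \<subseteq> P \<and> P \<inter> T = {} \<and>
            (\<forall>J. ideal_in UNIV J \<and> P \<subseteq> J \<and> J \<inter> T = {} \<longrightarrow> J = P)"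
proof -
  define A where "A = {P. ideal_in UNIV P \<and> K \<subseteq> P \<and> P \<inter> T = {}}"
  have "\<exists>M\<in>A. \<forall>X\<in>A. M \<subseteq> X \<longrightarrow> X = M"
  proof (rule subset_Zorn_nonempty)
    show "A \<noteq> {}" using assms unfolding A_def by blast
    fix C assume C: "C \<noteq> {}" "subset.chain A C"
    have sub: "C \<subseteq> A" and ch: "\<forall>X\<in>C. \<forall>Y\<in>C. X \<subseteq> Y \<or> Y \<subseteq> X"
      using C(2) by (auto simp: subset_chain_def)
    have idC: "ideal_in UNIV X" if "X \<in> C" for X using sub that unfolding A_def by blast
    have KC: "K \<subseteq> X" if "X \<in> C" for X using sub that unfolding A_def by blast
    have TC: "X \<inter> T = {}" if "X \<in> C" for X using sub that unfolding A_def by blast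
    obtain X0 where X0: "X0 \<in> C" using C(1) by blast
    have "0 \<in> \<Union>C" using X0 idealD(1)[OF idC[OF X0]] by blast
    moreover have "a + b \<in> \<Union>C" if ab: "a \<in> \<Union>C" "b \<in> \<Union>C" for a b
    proof -
      obtain X Y where XY: "X\<in>C" "Y\<in>C" "a\<in>X" "b\<in>Y" using ab by (meson UnionE)
      show ?thesis
      proof (cases "X \<subseteq> Y")
        case True
        then have "a \<in> Y" using XY(3) by blast
        then have "a + b \<in> Y" by (rule idealD(2)[OF idC[OF XY(2)] _ XY(4)])
        then show ?thesis using XY(2) by blast
      next
        case False then have "Y \<subseteq> X" using ch XY by blast
        then have "b \<in> X" using XY(4) by blast
        then have "a + b \<in> X" by (rule idealD(2)[OF idC[OF XY(1)] XY(3)])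
        then show ?thesis using XY(1) by blast
      qed
    qed
    moreover have "r * a \<in> \<Union>C" if a: "a \<in> \<Union>C" for r a
    proof -
      obtain X where X: "X \<in> C" "a \<in> X" using a by (meson UnionE)
      have "r * a \<in> X" by (rule idealD(3)[OF idC[OF X(1)] X(2)])
      then show ?thesis using X(1) by blast
    qed
    ultimately have "ideal_in UNIV (\<Union>C)" unfolding ideal_in_def by simp
    moreover have "K \<subseteq> \<Union>C" using X0 KC by blast
    moreover have "\<Union>C \<inter> T = {}" using TC by blast
    ultimately show "\<Union>C \<in> A" unfolding A_def by (intro CollectI conjI)
  qed
  then obtain P where P: "P \<in> A" "\<forall>X\<in>A. P \<subseteq> X \<longrightarrow> X = P" by (elim bexE)
  have P1: "ideal_in UNIV P" "K \<subseteq> P" "P \<inter> T = {}" using P(1) unfolding A_def by simp_all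
  show ?thesis
  proof (intro exI[of _ P] conjI allI impI P1)
    fix J assume J: "ideal_in UNIV J \<and> P \<subseteq> J \<and> J \<inter> T = {}"
    then have "J \<in> A" using P1(2) unfolding A_def by auto
    then show "J = P" using P(2) J by simp
  qed
qed

lemma avoid_prime:
  fixes P T :: "'a::comm_ring_1 set"
  assumes I: "ideal_in UNIV P" and PT: "P \<inter> T = {}" and T1: "1 \<in> T"
    and Tm: "\<And>a b. a \<in> T \<Longrightarrow> b \<in> T \<Longrightarrow> a * b \<in> T"
    and mx: "\<forall>J. ideal_in UNIV J \<and> P \<subseteq> J \<and> J \<inter> T = {} \<longrightarrow> J = P"
  shows "prime_ideal_in UNIV P"
proof -
  have "P \<noteq> UNIV" using PT T1 by auto
  moreover have "a \<in> P \<or> b \<in> P" if ab: "a * b \<in> P" for a b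
  proof (rule ccontr)
    assume n: "\<not> (a \<in> P \<or> b \<in> P)"
    have "gen a P \<noteq> P" using gen_mem[OF I, of a] n by auto
    then have "gen a P \<inter> T \<noteq> {}"
      using mx[rule_format, OF conjI[OF gen_ideal[OF I] conjI[OF gen_sub]]] by blast
    then obtain p1 r1 where p1: "p1 \<in> P" "p1 + r1 * a \<in> T" unfolding gen_def by auto
    have "gen b P \<noteq> P" using gen_mem[OF I, of b] n by auto
    then have "gen b P \<inter> T \<noteq> {}"
      using mx[rule_format, OF conjI[OF gen_ideal[OF I] conjI[OF gen_sub]]] by blast
    then obtain p2 r2 where p2: "p2 \<in> P" "p2 + r2 * b \<in> T" unfolding gen_def by auto
    have inT: "(p1 + r1 * a) * (p2 + r2 * b) \<in> T" using Tm p1 p2 by blast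
    have eq: "(p1 + r1 * a) * (p2 + r2 * b) = (p2 + r2 * b) * p1 + (r1 * a) * p2 + (r1 * r2) * (a * b)"
      by (simp add: algebra_simps)
    have h1: "(p2 + r2 * b) * p1 \<in> P" using idealD(3)[OF I p1(1)] .
    have h2: "(r1 * a) * p2 \<in> P" using idealD(3)[OF I p2(1)] .
    have h3: "(r1 * r2) * (a * b) \<in> P" using idealD(3)[OF I ab] .
    have "(p2 + r2 * b) * p1 + (r1 * a) * p2 + (r1 * r2) * (a * b) \<in> P"
      using idealD(2)[OF I idealD(2)[OF I h1 h2] h3] .
    then show False using inT eq PT by auto
  qed
  ultimately show ?thesis unfolding prime_ideal_in_def using I by auto
qed

lemma maximal_is_prime:
  fixes M :: "'a::comm_ring_1 set"
  assumes "maximal_ideal_in UNIV M" shows "prime_ideal_in UNIV M"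
proof (rule avoid_prime[of M "{1}"])
  show I: "ideal_in UNIV M" using assms by (simp add: maximal_ideal_in_def)
  show "M \<inter> {1} = {}" using assms ideal_one_UNIV[OF I] by (auto simp: maximal_ideal_in_def)
  show "\<forall>J. ideal_in UNIV J \<and> M \<subseteq> J \<and> J \<inter> {1} = {} \<longrightarrow> J = M"
    using assms by (auto simp: maximal_ideal_in_def)
qed auto

lemma exists_maximal:
  fixes K :: "'a::comm_ring_1 set"
  assumes "ideal_in UNIV K" "1 \<notin> K"
  shows "\<exists>N. maximal_ideal_in UNIV N \<and> K \<subseteq> N"
proof -
  obtain N where N: "ideal_in UNIV N" "K \<subseteq> N" "N \<inter> {1} = {}"
    "\<forall>J. ideal_in UNIV J \<and> N \<subseteq> J \<and> J \<inter> {1} = {} \<longrightarrow> J = N"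
    using zorn_avoid[of K "{1}"] assms by auto
  have "maximal_ideal_in UNIV N"
    unfolding maximal_ideal_in_def
  proof (intro conjI allI impI)
    show "ideal_in UNIV N" by fact
    show "N \<noteq> UNIV" using N(3) by auto
    fix J assume J: "ideal_in UNIV J \<and> N \<subseteq> J"
    show "J = N \<or> J = UNIV"
    proof (cases "1 \<in> J")
      case True then show ?thesis using ideal_one_UNIV J by blast
    next
      case False then show ?thesis using N(4) J by auto
    qed
  qed
  then show ?thesis using N(2) by blast
qed

lemma exists_prime_avoid_power:
  fixes K :: "'a::comm_ring_1 set"
  assumes "ideal_in UNIV K" "\<forall>n. f ^ n \<notin> K"
  shows "\<exists>P. prime_ideal_in UNIV P \<and> K \<subseteq> P \<and> f \<notin> P"
proof -
  let ?T = "range (\<lambda>n. f ^ n)"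
  obtain P where P: "ideal_in UNIV P" "K \<subseteq> P" "P \<inter> ?T = {}"
    "\<forall>J. ideal_in UNIV J \<and> P \<subseteq> J \<and> J \<inter> ?T = {} \<longrightarrow> J = P"
    using zorn_avoid[of K ?T] assms by fastforce
  have "prime_ideal_in UNIV P"
  proof (rule avoid_prime[OF P(1) P(3) _ _ P(4)])
    show "1 \<in> ?T" by (metis power_0 rangeI)
    fix a b assume "a \<in> ?T" "b \<in> ?T"
    then show "a * b \<in> ?T" by (auto simp: power_add[symmetric])
  qed
  moreover have "f \<notin> P" using P(3) by (metis disjoint_iff power_one_right rangeI)
  ultimately show ?thesis using P(2) by blast
qed

lemma prime_power_notin:
  assumes "prime_ideal_in UNIV P" "f \<notin> P" shows "f ^ n \<notin> P"
proof (induction n)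
  case 0
  have "1 \<notin> P" using assms ideal_one_UNIV by (auto simp: prime_ideal_in_def)
  then show ?case by simp
next
  case (Suc n) then show ?case using assms by (auto simp: prime_ideal_in_def)
qed


section \<open>Zariski topology\<close>

lemma prime_ideal: "prime_ideal_in UNIV P \<Longrightarrow> ideal_in UNIV P"
  by (simp add: prime_ideal_in_def)

lemma prime_mult_notin:
  assumes "prime_ideal_in UNIV P" "x \<notin> P" "y \<notin> P" shows "x * y \<notin> P"
  using assms unfolding prime_ideal_in_def by blast

definition Dx :: "'a::comm_ring_1 \<Rightarrow> 'a set set" where
  "Dx x = {P. prime_ideal_in UNIV P \<and> x \<notin> P}"

lemma Dx_mult: "Dx (x * y) \<subseteq> Dx x \<inter> Dx y"
proof
  fix Q assume Q: "Q \<in> Dx (x * y)"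
  then have pQ: "prime_ideal_in UNIV Q" and n: "x * y \<notin> Q" by (auto simp: Dx_def)
  have "x \<notin> Q" using n ideal_mult_right[OF prime_ideal[OF pQ], of x y] by blast
  moreover have "y \<notin> Q" using n idealD(3)[OF prime_ideal[OF pQ], of y x] by blast
  ultimately show "Q \<in> Dx x \<inter> Dx y" using pQ by (simp add: Dx_def)
qed

lemma openin_zariski_iff:
  "openin zariski U \<longleftrightarrow>
    (\<exists>W. generate_topology_on {{P \<in> Spec. \<not> X \<subseteq> P} | X. True} W \<and> U = W \<inter> Spec)"
  by (simp add: zariski_def openin_subtopology openin_topology_generated_by_iff)

lemma zar_local:
  fixes W :: "'a::comm_ring_1 set set"
  assumes "generate_topology_on {{P \<in> Spec. \<not> X \<subseteq> P} | X. True} W"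
  shows "P \<in> W \<Longrightarrow> prime_ideal_in UNIV P \<Longrightarrow> \<exists>x. x \<notin> P \<and> Dx x \<subseteq> W"
  using assms
proof (induction arbitrary: P rule: generate_topology_on.induct)
  case Empty then show ?case by simp
next
  case (Int a b)
  obtain x where x: "x \<notin> P" "Dx x \<subseteq> a" using Int.IH(1)[of P] Int.prems by blast
  obtain y where y: "y \<notin> P" "Dx y \<subseteq> b" using Int.IH(2)[of P] Int.prems by blast
  have "x * y \<notin> P" using prime_mult_notin[OF Int.prems(2) x(1) y(1)] .
  moreover have "Dx (x * y) \<subseteq> a \<inter> b" using Dx_mult[of x y] x(2) y(2) by blast
  ultimately show ?case by blast
next
  case (UN K)
  then obtain k where k: "k \<in> K" "P \<in> k" by blast
  then obtain x where "x \<notin> P" "Dx x \<subseteq> k" using UN.IH[OF k(1) k(2) UN.prems(2)] by blast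
  then show ?case using k(1) by blast
next
  case (Basis s)
  then obtain X where X: "s = {P \<in> Spec. \<not> X \<subseteq> P}" by blast
  then obtain x where x: "x \<in> X" "x \<notin> P" using Basis.prems by blast
  have "Dx x \<subseteq> s" unfolding X Dx_def using x(1) by blast
  then show ?case using x(2) by blast
qed

lemma Dx_open: "openin zariski (Dx x)"
proof -
  have "generate_topology_on {{P \<in> Spec. \<not> X \<subseteq> P} | X. True} {P \<in> Spec. \<not> {x} \<subseteq> P}"
    by (rule generate_topology_on.Basis) blast
  moreover have "Dx x = {P \<in> Spec. \<not> {x} \<subseteq> P} \<inter> Spec" by (auto simp: Dx_def)
  ultimately show ?thesis unfolding openin_zariski_iff by blast
qed

lemma Dx_subset_open:
  assumes "openin zariski U" "P \<in> U"
  shows "\<exists>x. x \<notin> P \<and> P \<in> Dx x \<and> Dx x \<subseteq> U"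
proof -
  obtain W where W: "generate_topology_on {{P \<in> Spec. \<not> X \<subseteq> P} | X. True} W" "U = W \<inter> Spec"
    using assms(1) unfolding openin_zariski_iff by blast
  have "P \<in> W" "prime_ideal_in UNIV P" using W(2) assms(2) by auto
  then obtain x where x: "x \<notin> P" "Dx x \<subseteq> W" using zar_local[OF W(1)] by blast
  have "Dx x \<subseteq> U" using x(2) W(2) by (auto simp: Dx_def)
  moreover have "P \<in> Dx x" using x(1) \<open>prime_ideal_in UNIV P\<close> by (simp add: Dx_def)
  ultimately show ?thesis using x(1) by blast
qed

lemma compact_open_finite:
  fixes U :: "'a::comm_ring_1 set set"
  assumes "openin zariski U" "compactin zariski U"
  shows "\<exists>S. finite S \<and> U = {P. prime_ideal_in UNIV P \<and> (\<exists>s\<in>S. s \<notin> P)}"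
proof -
  define X where "X = {x. Dx x \<subseteq> U}"
  have cov: "U \<subseteq> \<Union>(Dx ` X)"
  proof
    fix P assume "P \<in> U"
    then obtain x where "P \<in> Dx x" "Dx x \<subseteq> U" using Dx_subset_open[OF assms(1)] by blast
    then show "P \<in> \<Union>(Dx ` X)" unfolding X_def by blast
  qed
  have op: "\<forall>V\<in>Dx ` X. openin zariski V" using Dx_open by blast
  obtain F where F: "finite F" "F \<subseteq> Dx ` X" "U \<subseteq> \<Union>F"
    using assms(2) op cov unfolding compactin_def by meson
  obtain S where S: "S \<subseteq> X" "finite S" "F = Dx ` S" using finite_subset_image[OF F(1) F(2)] by blast
  have "U = {P. prime_ideal_in UNIV P \<and> (\<exists>s\<in>S. s \<notin> P)}"
  proof
    show "U \<subseteq> {P. prime_ideal_in UNIV P \<and> (\<exists>s\<in>S. s \<notin> P)}"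
      using F(3) S(3) by (auto simp: Dx_def)
    show "{P. prime_ideal_in UNIV P \<and> (\<exists>s\<in>S. s \<notin> P)} \<subseteq> U"
      using S(1) unfolding X_def Dx_def by blast
  qed
  then show ?thesis using S(2) by blast
qed

definition ihull :: "'a::comm_ring_1 set \<Rightarrow> 'a set" where
  "ihull G = \<Inter>{I. ideal_in UNIV I \<and> G \<subseteq> I}"

lemma ihull_ideal: "ideal_in UNIV (ihull G)"
proof -
  have "0 \<in> ihull G" unfolding ihull_def using idealD(1) by blast
  moreover have "a + b \<in> ihull G" if "a \<in> ihull G" "b \<in> ihull G" for a b
    using that unfolding ihull_def using idealD(2) by blast
  moreover have "r * a \<in> ihull G" if "a \<in> ihull G" for r a
    using that unfolding ihull_def using idealD(3) by blast
  ultimately show ?thesis unfolding ideal_in_def by simp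
qed

lemma ihull_sub: "G \<subseteq> ihull G"
  unfolding ihull_def by blast

lemma ihull_least: "ideal_in UNIV I \<Longrightarrow> G \<subseteq> I \<Longrightarrow> ihull G \<subseteq> I"
  unfolding ihull_def by blast

lemma ihull_mono: "G \<subseteq> H \<Longrightarrow> ihull G \<subseteq> ihull H"
  unfolding ihull_def by blast

lemma topspace_zariski: "prime_ideal_in UNIV P \<Longrightarrow> P \<in> topspace zariski"
proof -
  assume P: "prime_ideal_in UNIV P"
  have "(1::'a) \<notin> P" using P ideal_one_UNIV by (auto simp: prime_ideal_in_def)
  then have "P \<in> Dx 1" using P by (simp add: Dx_def)
  then show ?thesis using openin_subset[OF Dx_open] by blast
qed


lemma Dx_compact: "compactin zariski (Dx (f::'a::comm_ring_1))"
  unfolding compactin_def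
proof (intro conjI allI impI)
  show "Dx f \<subseteq> topspace zariski" using topspace_zariski by (auto simp: Dx_def)
  fix \<U> :: "'a set set set"
  assume asm: "(\<forall>U\<in>\<U>. openin zariski U) \<and> Dx f \<subseteq> \<Union>\<U>"
  define S where "S = {x. \<exists>W\<in>\<U>. Dx x \<subseteq> W}"
  define K where "K = \<Union>{ihull G | G. finite G \<and> G \<subseteq> S}"
  have K0: "0 \<in> K"
  proof -
    have "0 \<in> ihull {}" using idealD(1)[OF ihull_ideal] .
    then show ?thesis unfolding K_def by blast
  qed
  have Kadd: "a + b \<in> K" if ab: "a \<in> K" "b \<in> K" for a b
  proof -
    obtain G1 where G1: "finite G1" "G1 \<subseteq> S" "a \<in> ihull G1" using ab(1) unfolding K_def by blast
    obtain G2 where G2: "finite G2" "G2 \<subseteq> S" "b \<in> ihull G2" using ab(2) unfolding K_def by blast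
    have "a \<in> ihull (G1 \<union> G2)" using G1(3) ihull_mono[of G1 "G1 \<union> G2"] by blast
    moreover have "b \<in> ihull (G1 \<union> G2)" using G2(3) ihull_mono[of G2 "G1 \<union> G2"] by blast
    ultimately have "a + b \<in> ihull (G1 \<union> G2)" using idealD(2)[OF ihull_ideal] by blast
    moreover have "finite (G1 \<union> G2)" "G1 \<union> G2 \<subseteq> S" using G1 G2 by auto
    ultimately show ?thesis unfolding K_def by blast
  qed
  have Kmul: "r * a \<in> K" if a: "a \<in> K" for r a
  proof -
    obtain G1 where G1: "finite G1" "G1 \<subseteq> S" "a \<in> ihull G1" using a unfolding K_def by blast
    have "r * a \<in> ihull G1" using idealD(3)[OF ihull_ideal G1(3)] .
    then show ?thesis using G1(1,2) unfolding K_def by blast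
  qed
  have Kid: "ideal_in UNIV K" unfolding ideal_in_def using K0 Kadd Kmul by simp
  have "\<exists>n. f ^ n \<in> K"
  proof (rule ccontr)
    assume "\<not> (\<exists>n. f ^ n \<in> K)"
    then obtain P where P: "prime_ideal_in UNIV P" "K \<subseteq> P" "f \<notin> P"
      using exists_prime_avoid_power[OF Kid] by blast
    have "P \<in> Dx f" using P by (simp add: Dx_def)
    then obtain W where W: "W \<in> \<U>" "P \<in> W" using asm by blast
    have "openin zariski W" using asm W(1) by blast
    then obtain x where x: "x \<notin> P" "Dx x \<subseteq> W" using Dx_subset_open W(2) by blast
    have "x \<in> S" unfolding S_def using W(1) x(2) by blast
    then have "x \<in> ihull {x}" "finite {x}" "{x} \<subseteq> S" using ihull_sub by auto
    then have "x \<in> K" unfolding K_def by blast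
    then show False using P(2) x(1) by blast
  qed
  then obtain n G where G: "finite G" "G \<subseteq> S" "f ^ n \<in> ihull G" unfolding K_def by blast
  have "\<forall>s\<in>G. \<exists>W. W \<in> \<U> \<and> Dx s \<subseteq> W" using G(2) unfolding S_def by blast
  then obtain g where g: "\<forall>s\<in>G. g s \<in> \<U> \<and> Dx s \<subseteq> g s" by metis
  show "\<exists>\<F>. finite \<F> \<and> \<F> \<subseteq> \<U> \<and> Dx f \<subseteq> \<Union>\<F>"
  proof (intro exI[of _ "g ` G"] conjI)
    show "finite (g ` G)" using G(1) by simp
    show "g ` G \<subseteq> \<U>" using g by blast
    show "Dx f \<subseteq> \<Union>(g ` G)"
    proof
      fix P assume "P \<in> Dx f"
      then have P: "prime_ideal_in UNIV P" "f \<notin> P" by (auto simp: Dx_def)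
      have "f ^ n \<notin> P" using prime_power_notin[OF P] .
      then have "\<not> G \<subseteq> P" using ihull_least[OF prime_ideal[OF P(1)]] G(3) by blast
      then obtain s where s: "s \<in> G" "s \<notin> P" by blast
      then have "P \<in> Dx s" using P(1) by (simp add: Dx_def)
      then show "P \<in> \<Union>(g ` G)" using g s(1) by blast
    qed
  qed
qed


lemma sum_delta_mult:
  fixes a x :: "'a::comm_ring_1"
  assumes "finite F" "x \<in> F"
  shows "(\<Sum>f\<in>F. (if f = x then a else 0) * f) = a * x"
proof -
  have "(\<Sum>f\<in>F. (if f = x then a else 0) * f) = (\<Sum>f\<in>F. if f = x then a * x else 0)"
    by (rule sum.cong) auto
  also have "\<dots> = a * x" using assms by (simp add: sum.delta)
  finally show ?thesis .
qed

lemma fg_isolated: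
  fixes M :: "'a::comm_ring_1 set"
  assumes mx: "maximal_ideal_in UNIV M" and fg: "finitely_generated_ideal M"
  shows "isolated_point_in max_inverse M"
proof -
  obtain F where F: "finite F" "M = {\<Sum>f\<in>F. c f * f | c. True}"
    using fg unfolding finitely_generated_ideal_def by blast
  have I: "ideal_in UNIV M" using mx by (simp add: maximal_ideal_in_def)
  have pM: "prime_ideal_in UNIV M" using maximal_is_prime[OF mx] .
  have memM: "(\<Sum>f\<in>F. c f * f) \<in> M" for c
  proof -
    have "(\<Sum>f\<in>F. c f * f) \<in> {\<Sum>f\<in>F. c f * f | c. True}" by blast
    then show ?thesis using F(2) by simp
  qed
  have FM: "F \<subseteq> M"
  proof
    fix x assume x: "x \<in> F"
    have "(\<Sum>f\<in>F. (if f = x then 1 else 0) * f) = x" using sum_delta_mult[OF F(1) x, of 1] by simp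
    then show "x \<in> M" using memM[of "\<lambda>f. if f = x then 1 else 0"] by simp
  qed
  define U where "U = {P \<in> Spec. \<not> M \<subseteq> P}"
  have U_eq: "U = \<Union>(Dx ` F)"
  proof
    show "U \<subseteq> \<Union>(Dx ` F)"
    proof
      fix P assume P: "P \<in> U"
      then have pP: "prime_ideal_in UNIV P" and nM: "\<not> M \<subseteq> P" unfolding U_def by auto
      have "\<not> F \<subseteq> P"
      proof
        assume FP: "F \<subseteq> P"
        have "M \<subseteq> P"
        proof
          fix m assume "m \<in> M"
          then obtain c where m: "m = (\<Sum>f\<in>F. c f * f)" using F(2) by blast
          have "(\<Sum>f\<in>F. c f * f) \<in> P"
            by (rule ideal_sum[OF prime_ideal[OF pP] F(1)]) (use FP idealD(3)[OF prime_ideal[OF pP]] in blast)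
          then show "m \<in> P" using m by simp
        qed
        then show False using nM by simp
      qed
      then obtain f where "f \<in> F" "f \<notin> P" by blast
      then show "P \<in> \<Union>(Dx ` F)" using pP by (auto simp: Dx_def)
    qed
    show "\<Union>(Dx ` F) \<subseteq> U" using FM unfolding U_def Dx_def by blast
  qed
  have Uc: "compactin zariski U"
    unfolding U_eq by (rule compactin_Union) (use F(1) Dx_compact in auto)
  have Uo: "openin zariski U"
  proof -
    have "generate_topology_on {{P \<in> Spec. \<not> X \<subseteq> P} | X. True} U"
      unfolding U_def by (rule generate_topology_on.Basis) blast
    moreover have "U = U \<inter> Spec" unfolding U_def by blast
    ultimately show ?thesis unfolding openin_zariski_iff by blast
  qed
  have SU: "Spec - U = {M}"
  proof
    show "Spec - U \<subseteq> {M}"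
    proof
      fix P assume "P \<in> Spec - U"
      then have pP: "prime_ideal_in UNIV P" and MP: "M \<subseteq> P" unfolding U_def by auto
      have "P = M \<or> P = UNIV" using mx pP MP unfolding maximal_ideal_in_def prime_ideal_in_def by blast
      then show "P \<in> {M}" using pP unfolding prime_ideal_in_def by blast
    qed
    show "{M} \<subseteq> Spec - U" using pM unfolding U_def by blast
  qed
  have "openin inverse_topology {M}"
  proof -
    have "generate_topology_on {Spec - U | U. openin zariski U \<and> compactin zariski U} (Spec - U)"
      by (rule generate_topology_on.Basis) (use Uo Uc in blast)
    moreover have "{M} = (Spec - U) \<inter> Spec" using SU by blast
    ultimately show ?thesis unfolding inverse_topology_def openin_subtopology openin_topology_generated_by_iff
      by blast
  qed
  then have op: "openin max_inverse {M}"
    unfolding max_inverse_def openin_subtopology using mx by blast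
  then have "M \<in> topspace max_inverse" using openin_subset by blast
  then show ?thesis unfolding isolated_point_in_def using op by blast
qed


lemma inv_local:
  fixes W :: "'a::comm_ring_1 set set"
  assumes "generate_topology_on {Spec - U | U. openin zariski U \<and> compactin zariski U} W"
  shows "P \<in> W \<Longrightarrow> prime_ideal_in UNIV P \<Longrightarrow>
           \<exists>S. finite S \<and> S \<subseteq> P \<and> {Q. prime_ideal_in UNIV Q \<and> S \<subseteq> Q} \<subseteq> W"
  using assms
proof (induction arbitrary: P rule: generate_topology_on.induct)
  case Empty then show ?case by simp
next
  case (Int a b)
  obtain S1 where S1: "finite S1" "S1 \<subseteq> P" "{Q. prime_ideal_in UNIV Q \<and> S1 \<subseteq> Q} \<subseteq> a"
    using Int.IH(1)[of P] Int.prems by blast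
  obtain S2 where S2: "finite S2" "S2 \<subseteq> P" "{Q. prime_ideal_in UNIV Q \<and> S2 \<subseteq> Q} \<subseteq> b"
    using Int.IH(2)[of P] Int.prems by blast
  have "finite (S1 \<union> S2)" "S1 \<union> S2 \<subseteq> P" using S1 S2 by auto
  moreover have "{Q. prime_ideal_in UNIV Q \<and> S1 \<union> S2 \<subseteq> Q} \<subseteq> a \<inter> b" using S1(3) S2(3) by blast
  ultimately show ?case by blast
next
  case (UN K)
  then obtain k where k: "k \<in> K" "P \<in> k" by blast
  obtain S where "finite S" "S \<subseteq> P" "{Q. prime_ideal_in UNIV Q \<and> S \<subseteq> Q} \<subseteq> k"
    using UN.IH[OF k(1) k(2) UN.prems(2)] by blast
  then show ?case using k(1) by blast
next
  case (Basis s)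
  then obtain U where U: "s = Spec - U" "openin zariski U" "compactin zariski U" by blast
  obtain S where S: "finite S" "U = {P. prime_ideal_in UNIV P \<and> (\<exists>s\<in>S. s \<notin> P)}"
    using compact_open_finite[OF U(2) U(3)] by blast
  have "S \<subseteq> P" using Basis.prems U(1) S(2) by blast
  moreover have "{Q. prime_ideal_in UNIV Q \<and> S \<subseteq> Q} \<subseteq> s" using U(1) S(2) by blast
  ultimately show ?case using S(1) by blast
qed

lemma isolated_fg:
  fixes M :: "'a::idom set"
  assumes ad: "almost_dedekind TYPE('a)" and mx: "maximal_ideal_in UNIV M"
    and iso: "isolated_point_in max_inverse M"
  shows "finitely_generated_ideal M"
proof -
  have I: "ideal_in UNIV M" using mx by (simp add: maximal_ideal_in_def)
  have pM: "prime_ideal_in UNIV M" using maximal_is_prime[OF mx] .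
  have one: "(1::'a) \<notin> M" using mx ideal_one_UNIV[OF I] by (auto simp: maximal_ideal_in_def)
  have nz: "s \<noteq> 0" if "s \<notin> M" for s using that idealD(1)[OF I] by auto
  \<comment> \<open>Step 1: a finite set S in M lying in no other maximal ideal\<close>
  have "openin max_inverse {M}" using iso by (simp add: isolated_point_in_def)
  then obtain W1 where W1: "openin inverse_topology W1" "{M} = W1 \<inter> Max_spec"
    unfolding max_inverse_def openin_subtopology by blast
  then obtain W2 where W2: "generate_topology_on {Spec - U | U. openin zariski U \<and> compactin zariski U} W2"
    "W1 = W2 \<inter> Spec"
    unfolding inverse_topology_def openin_subtopology openin_topology_generated_by_iff by blast
  have "M \<in> W1 \<inter> Max_spec" using W1(2) by (metis insertI1)
  then have "M \<in> W1" by simp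
  then have MW2: "M \<in> W2" using W2(2) by simp
  obtain S where S: "finite S" "S \<subseteq> M" "{Q. prime_ideal_in UNIV Q \<and> S \<subseteq> Q} \<subseteq> W2"
    using inv_local[OF W2(1) MW2 pM] by (elim exE conjE)
  have Smax: "N = M" if N: "maximal_ideal_in UNIV N" "S \<subseteq> N" for N
  proof -
    have "prime_ideal_in UNIV N" using maximal_is_prime[OF N(1)] .
    then have "N \<in> W2" "N \<in> Spec" using S(3) N(2) by auto
    then have "N \<in> W1 \<inter> Max_spec" using W2(2) N(1) by blast
    then show ?thesis using W1(2) by blast
  qed
  \<comment> \<open>Step 2: a local generator t\<close>
  have "\<forall>M::'a set. maximal_ideal_in UNIV M \<longrightarrow> is_DVR (localization M)"
    using ad unfolding almost_dedekind_def .
  then have dvr: "is_DVR (localization M)" using mx by simp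
  define mm where "mm = {Fract a s | a s. a \<in> M \<and> s \<notin> M}"
  have loc1: "(1::'a fract) \<in> localization M"
    unfolding localization_def One_fract_def using one by blast
  have mm_ideal: "ideal_in (localization M) mm"
  proof -
    have "mm \<subseteq> localization M" unfolding mm_def localization_def by blast
    moreover have "0 \<in> mm" unfolding mm_def Zero_fract_def using one idealD(1)[OF I] by blast
    moreover have "x + y \<in> mm" if xy: "x \<in> mm" "y \<in> mm" for x y
    proof -
      obtain a s where as: "x = Fract a s" "a \<in> M" "s \<notin> M" using xy(1) unfolding mm_def by blast
      obtain b u where bu: "y = Fract b u" "b \<in> M" "u \<notin> M" using xy(2) unfolding mm_def by blast
      have "x + y = Fract (a * u + b * s) (s * u)" using as bu nz by simp
      moreover have "a * u + b * s \<in> M"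
        using idealD(2)[OF I ideal_mult_right[OF I as(2)] ideal_mult_right[OF I bu(2)]] .
      moreover have "s * u \<notin> M" using prime_mult_notin[OF pM as(3) bu(3)] .
      ultimately show ?thesis unfolding mm_def by blast
    qed
    moreover have "r * x \<in> mm" if r: "r \<in> localization M" and x: "x \<in> mm" for r x
    proof -
      obtain a s where as: "x = Fract a s" "a \<in> M" "s \<notin> M" using x unfolding mm_def by blast
      obtain c v where cv: "r = Fract c v" "v \<notin> M" using r unfolding localization_def by blast
      have "r * x = Fract (c * a) (v * s)" using as cv by simp
      moreover have "c * a \<in> M" using idealD(3)[OF I as(2)] .
      moreover have "v * s \<notin> M" using prime_mult_notin[OF pM cv(2) as(3)] .
      ultimately show ?thesis unfolding mm_def by blast
    qed
    ultimately show ?thesis unfolding ideal_in_def by simp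
  qed
  have "\<forall>I. ideal_in (localization M) I \<longrightarrow> principal_in (localization M) I"
    using dvr unfolding is_DVR_def by simp
  then have "principal_in (localization M) mm" using mm_ideal by simp
  then obtain g where g: "g \<in> localization M" "mm = {r * g | r. r \<in> localization M}"
    unfolding principal_in_def by (elim bexE) simp
  have "1 * g \<in> {r * g | r. r \<in> localization M}" using loc1 by blast
  then have "g \<in> mm" using g(2) by simp
  then obtain t s0 where ts0: "g = Fract t s0" "t \<in> M" "s0 \<notin> M" unfolding mm_def by blast
  have key: "\<exists>a s. s \<notin> M \<and> s * m = a * t" if m: "m \<in> M" for m
  proof -
    have "Fract m 1 \<in> mm" unfolding mm_def using m one by blast
    then obtain r where r: "r \<in> localization M" "Fract m 1 = r * g" using g(2) by blast
    obtain a v where av: "r = Fract a v" "v \<notin> M" using r(1) unfolding localization_def by blast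
    have "Fract m 1 = Fract (a * t) (v * s0)" using r(2) av(1) ts0(1) by simp
    moreover have "v * s0 \<noteq> 0" using nz av(2) ts0(3) by simp
    ultimately have "m * (v * s0) = (a * t) * 1" by (simp add: eq_fract)
    moreover have "v * s0 \<notin> M" using prime_mult_notin[OF pM av(2) ts0(3)] .
    ultimately show ?thesis by (metis mult.commute mult_1_right)
  qed
  \<comment> \<open>Step 3: M is generated by t and S\<close>
  define F where "F = insert t S"
  define span where "span = {\<Sum>f\<in>F. c f * f | c. True}"
  have finF: "finite F" using S(1) F_def by simp
  have FM: "F \<subseteq> M" using S(2) ts0(2) F_def by simp
  have span_mem: "(\<Sum>f\<in>F. c f * f) \<in> span" for c unfolding span_def by blast
  have span_delta: "a * x \<in> span" if "x \<in> F" for a x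
    using sum_delta_mult[OF finF that, of a] span_mem[of "\<lambda>f. if f = x then a else 0"] by simp
  have span_ideal: "ideal_in UNIV span"
  proof -
    have "0 \<in> span" using span_mem[of "\<lambda>_. 0"] by simp
    moreover have "x + y \<in> span" if xy: "x \<in> span" "y \<in> span" for x y
    proof -
      obtain c1 where c1: "x = (\<Sum>f\<in>F. c1 f * f)" using xy(1) unfolding span_def by blast
      obtain c2 where c2: "y = (\<Sum>f\<in>F. c2 f * f)" using xy(2) unfolding span_def by blast
      from c1 c2
      have "x + y = (\<Sum>f\<in>F. (c1 f + c2 f) * f)"
        by (simp add: sum.distrib distrib_right)
      then show ?thesis using span_mem by simp
    qed
    moreover have "r * x \<in> span" if x: "x \<in> span" for r x
    proof -
      obtain c1 where "x = (\<Sum>f\<in>F. c1 f * f)" using x unfolding span_def by blast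
      then have "r * x = (\<Sum>f\<in>F. (r * c1 f) * f)"
        by (simp add: sum_distrib_left mult.assoc)
      then show ?thesis using span_mem by simp
    qed
    ultimately show ?thesis unfolding ideal_in_def by simp
  qed
  have "M = span"
  proof
    show "span \<subseteq> M"
    proof
      fix x assume "x \<in> span"
      then obtain c where x: "x = (\<Sum>f\<in>F. c f * f)" unfolding span_def by blast
      have "(\<Sum>f\<in>F. c f * f) \<in> M"
        by (rule ideal_sum[OF I finF]) (use FM idealD(3)[OF I] in blast)
      then show "x \<in> M" using x by simp
    qed
    show "M \<subseteq> span"
    proof
      fix m assume m: "m \<in> M"
      define Km where "Km = {r. r * m \<in> span}"
      have Km_ideal: "ideal_in UNIV Km"
      proof -
        have "0 \<in> Km" unfolding Km_def using idealD(1)[OF span_ideal] by simp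
        moreover have "x + y \<in> Km" if "x \<in> Km" "y \<in> Km" for x y
          using that idealD(2)[OF span_ideal] unfolding Km_def by (simp add: distrib_right)
        moreover have "r * x \<in> Km" if "x \<in> Km" for r x
          using that idealD(3)[OF span_ideal] unfolding Km_def by (simp add: mult.assoc)
        ultimately show ?thesis unfolding ideal_in_def by simp
      qed
      show "m \<in> span"
      proof (rule ccontr)
        assume nm: "m \<notin> span"
        then have "1 \<notin> Km" unfolding Km_def by simp
        then obtain N where N: "maximal_ideal_in UNIV N" "Km \<subseteq> N"
          using exists_maximal[OF Km_ideal] by blast
        have pN: "prime_ideal_in UNIV N" using maximal_is_prime[OF N(1)] .
        show False
        proof (cases "N = M")
          case True
          obtain a s where as: "s \<notin> M" "s * m = a * t" using key[OF m] by blast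
          have "a * t \<in> span" using span_delta F_def by simp
          then have "s \<in> Km" unfolding Km_def using as(2) by simp
          then show False using N(2) True as(1) by blast
        next
          case False
          then have "\<not> S \<subseteq> N" using Smax N(1) by blast
          then obtain s1 where s1: "s1 \<in> S" "s1 \<notin> N" by blast
          have "m * s1 \<in> span" using span_delta F_def s1(1) by simp
          then have "s1 \<in> Km" unfolding Km_def by (simp add: mult.commute)
          then show False using N(2) s1(2) by blast
        qed
      qed
    qed
  qed
  then have "M = {\<Sum>f\<in>F. c f * f | c. True}" unfolding span_def .
  then show ?thesis unfolding finitely_generated_ideal_def using finF by (intro exI[of _ F] conjI)
qed

theorem proposition2p3:
  fixes M :: "'a::idom set"
  assumes "almost_dedekind TYPE('a)"
    and "maximal_ideal_in UNIV M"
  shows "isolated_point_in max_inverse M \<longleftrightarrow> finitely_generated_ideal M"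
  using fg_isolated[OF assms(2)] isolated_fg[OF assms] by blast

end
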